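(* Consider the patient model in the context with actions from an $(r,k)$-exploratory policy over a trajectory of length $T$, and let $N_i:=\sum_{t=1}^T\mathbf 1_{\{u_t=e_i\}}$. Let $\mathcal E_N(r,T,k)$ be the event $\{N_i>\frac{r(T-k)}{2(M+1)}\text{ for all }i=1,\dots,M\}$. Then for $\delta\in(0,1)$, $\mathbf P(\mathcal E_N(r,T,k))\geq1-\delta$ whenever $T\geq k+\frac8r(M+1)\log(M/\delta)$.
   Context: Patient model: $M\geq1$ treatments; $\mathcal U:=\{v\in\{0,1\}^M:\|v\|_0\leq1\}$ (so $|\mathcal U|=M+1$), $e_i$ basis vectors. $x_{t+1}=ax_t+b^\top u_t+c^\top d_t+w_t$, adherence $d^i_t\mid x_t,u^i_t\sim\mathrm{Bernoulli}(u^i_t\sigma(x_t+\mu_i))$, $\sigma$ the sigmoid; $x_1$ distributed as the noise. Parameters $a\in[0,\bar a]$ (known $\bar a\in(0,1)$), $\|b\|_\infty\leq\bar b$, $\|c\|_\infty\leq\bar c$, $\mu\in[-\bar\mu,\bar\mu]^M$. $x_t,u_t,d_t$ fully observed. Noise i.i.d., zero-symmetric, $\sigma_s^2$-subgaussian, bounded by $\bar w>0$, log-concave density, known variance. With $\mathcal F_t:=\sigma(x_{0:t},u_{0:t},d_{0:t},w_{0:t})$, an $(r,k)$-exploratory policy ($r\in(0,1]$, $k\in\mathbb N$) is one that in every block $\{j+1,\dots,j+k\}$, $j\geq0$, almost surely takes at least $\lceil rk\rceil$ actions drawn uniformly from $\mathcal U$ independently of $\mathcal F_{t-1}$. *)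

theory Defs
  imports "HOL-Probability.Probability"
begin

definition sigmoid :: "real \<Rightarrow> real" where
  "sigmoid z = 1 / (1 + exp (- z))"

text \<open>Treatment vectors are functions nat => real supported on the indices 0..M-1
  (index i corresponds to treatment i+1 of the paper).  The action set U.\<close>
definition Uset :: "nat \<Rightarrow> (nat \<Rightarrow> real) set" where
  "Uset M = {v. (\<forall>i. v i \<in> {0, 1}) \<and> (\<forall>i. M \<le> i \<longrightarrow> v i = 0) \<and> card {i. v i \<noteq> 0} \<le> 1}"

definition basis_vec :: "nat \<Rightarrow> nat \<Rightarrow> real" where
  "basis_vec i = (\<lambda>j. if j = i then 1 else 0)"

definition log_concave :: "(real \<Rightarrow> real) \<Rightarrow> bool" where
  "log_concave f \<longleftrightarrow> (\<forall>x. 0 \<le> f x) \<and>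
     (\<forall>x y \<theta>. 0 \<le> \<theta> \<and> \<theta> \<le> 1 \<longrightarrow>
        f x powr \<theta> * f y powr (1 - \<theta>) \<le> f (\<theta> * x + (1 - \<theta>) * y))"

definition gen_sigma :: "'w measure \<Rightarrow> ('w \<Rightarrow> real) set \<Rightarrow> 'w measure" where
  "gen_sigma P Xs = sigma (space P) {X -` A \<inter> space P | X A. X \<in> Xs \<and> A \<in> sets borel}"

definition patient_filtration ::
  "'w measure \<Rightarrow> nat \<Rightarrow> (nat \<Rightarrow> 'w \<Rightarrow> real) \<Rightarrow> (nat \<Rightarrow> 'w \<Rightarrow> nat \<Rightarrow> real)
    \<Rightarrow> (nat \<Rightarrow> 'w \<Rightarrow> nat \<Rightarrow> real) \<Rightarrow> (nat \<Rightarrow> 'w \<Rightarrow> real) \<Rightarrow> nat \<Rightarrow> 'w measure" where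
  "patient_filtration P M x u d w t =
     gen_sigma P (\<Union>s\<in>{..t}. {x s, w s} \<union> {(\<lambda>\<omega>. u s \<omega> i) | i. i < M}
                                      \<union> {(\<lambda>\<omega>. d s \<omega> i) | i. i < M})"

text \<open>(r,k)-exploratory policy: there is an F_{t-1}-predictable exploration indicator chi
  and draws zeta_t, uniform on U and independent of F_{t-1}, such that the action equals
  the draw whenever chi_t holds, and every block {j+1..j+k} a.s. contains at least
  ceil(r k) exploratory times.\<close>
definition exploratory ::
  "'w measure \<Rightarrow> nat \<Rightarrow> (nat \<Rightarrow> 'w measure) \<Rightarrow> (nat \<Rightarrow> 'w \<Rightarrow> nat \<Rightarrow> real) \<Rightarrow> real \<Rightarrow> nat \<Rightarrow> bool" where
  "exploratory P M F u r k \<longleftrightarrow>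
    (\<exists>explore draw.
       (\<forall>t\<ge>1. {\<omega> \<in> space P. explore t \<omega>} \<in> sets (F (t - 1))) \<and>
       (\<forall>t\<ge>1. (AE \<omega> in P. draw t \<omega> \<in> Uset M) \<and>
          (\<forall>v\<in>Uset M. {\<omega> \<in> space P. draw t \<omega> = v} \<in> sets P \<and>
             (\<forall>A\<in>sets (F (t - 1)).
                measure P ({\<omega> \<in> space P. draw t \<omega> = v} \<inter> A) = measure P A / real (M + 1)))) \<and>
       (\<forall>t\<ge>1. AE \<omega> in P. explore t \<omega> \<longrightarrow> u t \<omega> = draw t \<omega>) \<and>
       (\<forall>j. AE \<omega> in P. nat \<lceil>r * real k\<rceil> \<le> card {t \<in> {j+1..j+k}. explore t \<omega>}))"

definition count_treat :: "(nat \<Rightarrow> 'w \<Rightarrow> nat \<Rightarrow> real) \<Rightarrow> nat \<Rightarrow> nat \<Rightarrow> 'w \<Rightarrow> nat" where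
  "count_treat u T i \<omega> = card {t \<in> {1..T}. u t \<omega> = basis_vec i}"

end

theory Submission
  imports Defs
begin

lemma gen_sigma_props:
  assumes "Xs \<subseteq> borel_measurable P"
  shows "sets (gen_sigma P Xs) = sigma_sets (space P) {X -` A \<inter> space P | X A. X \<in> Xs \<and> A \<in> sets borel}"
    "space (gen_sigma P Xs) = space P"
    "subalgebra P (gen_sigma P Xs)"
proof -
  let ?G = "{X -` A \<inter> space P | X A. X \<in> Xs \<and> A \<in> sets borel}"
  have G: "?G \<subseteq> Pow (space P)" by auto
  show s: "sets (gen_sigma P Xs) = sigma_sets (space P) ?G"
    unfolding gen_sigma_def by (rule sets_measure_of[OF G])
  show sp: "space (gen_sigma P Xs) = space P"
    unfolding gen_sigma_def by (rule space_measure_of_conv)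
  have "?G \<subseteq> sets P" using assms by (auto simp: measurable_sets)
  then have "sigma_sets (space P) ?G \<subseteq> sets P"
    by (rule sets.sigma_sets_subset)
  then show "subalgebra P (gen_sigma P Xs)" unfolding subalgebra_def using s sp by simp
qed

lemma gen_sigma_mono:
  assumes "Xs \<subseteq> borel_measurable P" "Ys \<subseteq> borel_measurable P" "Xs \<subseteq> Ys"
  shows "sets (gen_sigma P Xs) \<subseteq> sets (gen_sigma P Ys)"
  unfolding gen_sigma_props(1)[OF assms(1)] gen_sigma_props(1)[OF assms(2)]
  by (rule sigma_sets_subseteq) (use assms(3) in blast)

lemma gen_sigma_gen:
  assumes "Xs \<subseteq> borel_measurable P" "X \<in> Xs" "A \<in> sets borel"
  shows "X -` A \<inter> space P \<in> sets (gen_sigma P Xs)"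
  unfolding gen_sigma_props(1)[OF assms(1)] using assms(2,3) by blast

lemma key_cond:
  fixes P F :: "'w measure" and E U :: "'w set" and p :: real and f :: "'w \<Rightarrow> real"
  assumes prob: "prob_space P" and sub: "subalgebra P F"
    and E: "E \<in> sets F" and U: "U \<in> sets P"
    and cond: "\<forall>A\<in>sets F. measure P (E \<inter> U \<inter> A) = p * measure P (E \<inter> A)"
    and fm: "f \<in> borel_measurable F" and fb: "\<And>\<omega>. \<bar>f \<omega>\<bar> \<le> B"
  shows "(\<integral>\<omega>. f \<omega> * indicator (E \<inter> U) \<omega> \<partial>P) = p * (\<integral>\<omega>. f \<omega> * indicator E \<omega> \<partial>P)"
proof -
  interpret prob_space P by (rule prob)
  interpret finite_measure_subalgebra P F
    by unfold_locales (rule sub)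
  have EP: "E \<in> sets P" using sub E unfolding subalgebra_def by blast
  have fP: "f \<in> borel_measurable P" by (rule measurable_from_subalg[OF sub fm])
  have iEF: "(\<lambda>\<omega>. p * indicator E \<omega> :: real) \<in> borel_measurable F" using E by measurable
  have intEU: "integrable P (indicator (E \<inter> U) :: 'w \<Rightarrow> real)"
    using EP U by (intro integrable_const_bound[where B=1]) auto
  have intE: "integrable P (\<lambda>\<omega>. p * indicator E \<omega> :: real)"
    using EP by (intro integrable_const_bound[where B="\<bar>p\<bar>"]) (auto simp: indicator_def)
  have ae: "AE \<omega> in P. real_cond_exp P F (indicator (E \<inter> U)) \<omega> = p * indicator E \<omega>"
  proof (rule real_cond_exp_charact)
    fix A assume A: "A \<in> sets F"
    then have AP: "A \<in> sets P" using sub unfolding subalgebra_def by blast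
    have "(\<integral>\<omega>\<in>A. indicator (E \<inter> U) \<omega> \<partial>P) = measure P (E \<inter> U \<inter> A)"
      using AP EP U by (simp add: set_lebesgue_integral_def indicator_inter_arith[symmetric] Int_ac)
    also have "\<dots> = p * measure P (E \<inter> A)" using cond A by blast
    also have "\<dots> = (\<integral>\<omega>\<in>A. p * indicator E \<omega> \<partial>P)"
      using AP EP by (simp add: set_lebesgue_integral_def indicator_inter_arith[symmetric] Int_ac mult.left_commute)
    finally show "(\<integral>\<omega>\<in>A. indicator (E \<inter> U) \<omega> \<partial>P) = (\<integral>\<omega>\<in>A. p * indicator E \<omega> \<partial>P)" .
  qed (use intEU intE iEF in auto)
  have B0: "0 \<le> B" using fb[of undefined] by linarith
  have intf: "integrable P (\<lambda>\<omega>. f \<omega> * indicator (E \<inter> U) \<omega>)"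
    using fP EP U fb B0 by (intro integrable_const_bound[where B=B]) (auto simp: indicator_def)
  have "(\<integral>\<omega>. f \<omega> * indicator (E \<inter> U) \<omega> \<partial>P) = (\<integral>\<omega>. f \<omega> * real_cond_exp P F (indicator (E \<inter> U)) \<omega> \<partial>P)"
    using real_cond_exp_intg(2)[OF intf fm] EP U by simp
  also have "\<dots> = (\<integral>\<omega>. f \<omega> * (p * indicator E \<omega>) \<partial>P)"
    by (rule integral_cong_AE) (use ae fP EP in auto)
  also have "\<dots> = p * (\<integral>\<omega>. f \<omega> * indicator E \<omega> \<partial>P)"
    by (simp add: mult.left_commute)
  finally show ?thesis .
qed

lemma super:
  fixes P :: "'w measure" and F :: "nat \<Rightarrow> 'w measure" and E U :: "nat \<Rightarrow> 'w set" and p :: real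
  assumes prob: "prob_space P" and sub: "\<forall>t. subalgebra P (F t)"
    and mono: "\<forall>s t. s \<le> t \<longrightarrow> sets (F s) \<subseteq> sets (F t)"
    and E: "\<forall>t\<ge>1. E t \<in> sets (F (t - 1))" and U: "\<forall>t\<ge>1. U t \<in> sets (F t)"
    and cond: "\<forall>t\<ge>1. \<forall>A\<in>sets (F (t - 1)). measure P (E t \<inter> U t \<inter> A) = p * measure P (E t \<inter> A)"
    and p: "0 \<le> p"
    and g_def: "g = (\<lambda>s \<omega>. 1 + (exp (p/2) - 1) * indicator (E s) \<omega> - exp (p/2) / 2 * indicator (E s \<inter> U s) \<omega> :: real)"
  shows "(\<integral>\<omega>. (\<Prod>s\<in>{1..t}. g s \<omega>) \<partial>P) \<le> 1"
    and "integrable P (\<lambda>\<omega>. \<Prod>s\<in>{1..t}. g s \<omega>)"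
proof -
  interpret prob_space P by (rule prob)
  define q where "q = exp (p/2)"
  have q1: "1 \<le> q" unfolding q_def using p by simp
  have gb: "0 \<le> g s \<omega> \<and> g s \<omega> \<le> q" for s \<omega>
    using q1 unfolding g_def q_def[symmetric] by (use q1 in \<open>auto simp: indicator_def\<close>)
  have Zb: "0 \<le> (\<Prod>s\<in>{1..t}. g s \<omega>) \<and> (\<Prod>s\<in>{1..t}. g s \<omega>) \<le> q ^ t" for t \<omega>
  proof -
    have "(\<Prod>s\<in>{1..t}. g s \<omega>) \<le> (\<Prod>s\<in>{1..t}. q)" by (rule prod_mono) (use gb in auto)
    then show ?thesis using gb by (auto intro: prod_nonneg)
  qed
  have EF: "E s \<in> sets (F t)" if "1 \<le> s" "s \<le> t" for s t
    using E mono that by (meson diff_le_self le_trans subsetD)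
  have UF: "U s \<in> sets (F t)" if "1 \<le> s" "s \<le> t" for s t
    using U mono that by blast
  have Zm: "(\<lambda>\<omega>. \<Prod>s\<in>{1..t}. g s \<omega>) \<in> borel_measurable (F t)" for t
  proof (rule borel_measurable_prod)
    fix s assume "s \<in> {1..t}"
    then have [measurable]: "E s \<in> sets (F t)" "U s \<in> sets (F t)" using EF UF by auto
    show "g s \<in> borel_measurable (F t)" unfolding g_def by measurable
  qed
  have ZmP: "(\<lambda>\<omega>. \<Prod>s\<in>{1..t}. g s \<omega>) \<in> borel_measurable P" for t
    using measurable_from_subalg[OF _ Zm] sub by blast
  have intZ: "integrable P (\<lambda>\<omega>. \<Prod>s\<in>{1..t}. g s \<omega>)" for t
    using Zb by (intro integrable_const_bound[where B="q^t"] ZmP) auto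
  then show "integrable P (\<lambda>\<omega>. \<Prod>s\<in>{1..t}. g s \<omega>)" .
  show "(\<integral>\<omega>. (\<Prod>s\<in>{1..t}. g s \<omega>) \<partial>P) \<le> 1"
  proof (induction t)
    case 0
    then show ?case by (simp add: prob_space)
  next
    case (Suc t)
    define Z where "Z = (\<lambda>\<omega>. \<Prod>s\<in>{1..t}. g s \<omega>)"
    have EP: "E (Suc t) \<in> sets P" using EF[of "Suc t" "Suc t"] sub unfolding subalgebra_def by auto
    have UP: "U (Suc t) \<in> sets P" using UF[of "Suc t" "Suc t"] sub unfolding subalgebra_def by auto
    have ZP: "Z \<in> borel_measurable P" unfolding Z_def by (rule ZmP)
    have i1: "integrable P (\<lambda>\<omega>. Z \<omega> * indicator (E (Suc t)) \<omega>)"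
      using Zb EP ZP unfolding Z_def by (intro integrable_const_bound[where B="q^t"]) (use q1 in \<open>auto simp: indicator_def\<close>)
    have i2: "integrable P (\<lambda>\<omega>. Z \<omega> * indicator (E (Suc t) \<inter> U (Suc t)) \<omega>)"
      using Zb EP UP ZP unfolding Z_def by (intro integrable_const_bound[where B="q^t"]) (use q1 in \<open>auto simp: indicator_def\<close>)
    have key: "(\<integral>\<omega>. Z \<omega> * indicator (E (Suc t) \<inter> U (Suc t)) \<omega> \<partial>P) = p * (\<integral>\<omega>. Z \<omega> * indicator (E (Suc t)) \<omega> \<partial>P)"
      using key_cond[OF prob sub[rule_format, of t], of "E (Suc t)" "U (Suc t)" p Z "q^t"]
        E[rule_format, of "Suc t"] UP cond Zm Zb unfolding Z_def by auto
    have split: "(\<Prod>s\<in>{1..Suc t}. g s \<omega>) = Z \<omega> + (q - 1) * (Z \<omega> * indicator (E (Suc t)) \<omega>)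
        - q / 2 * (Z \<omega> * indicator (E (Suc t) \<inter> U (Suc t)) \<omega>)" for \<omega>
      unfolding Z_def by (subst prod.nat_ivl_Suc') (auto simp: g_def q_def algebra_simps)
    have nn: "0 \<le> (\<integral>\<omega>. Z \<omega> * indicator (E (Suc t)) \<omega> \<partial>P)"
      using Zb unfolding Z_def by (intro integral_nonneg_AE) auto
    have qq: "q * (1 - p/2) \<le> 1"
    proof -
      have "1 - p/2 \<le> exp (- (p/2))" using exp_ge_add_one_self[of "-(p/2)"] by simp
      then have "q * (1 - p/2) \<le> q * exp (- (p/2))" using q1 by (intro mult_left_mono) auto
      also have "\<dots> = 1" unfolding q_def by (simp add: exp_minus)
      finally show ?thesis .
    qed
    have "(\<integral>\<omega>. (\<Prod>s\<in>{1..Suc t}. g s \<omega>) \<partial>P) = (\<integral>\<omega>. Z \<omega> \<partial>P)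
        + (q - 1) * (\<integral>\<omega>. Z \<omega> * indicator (E (Suc t)) \<omega> \<partial>P)
        - q / 2 * (\<integral>\<omega>. Z \<omega> * indicator (E (Suc t) \<inter> U (Suc t)) \<omega> \<partial>P)"
      unfolding split using intZ[of t] i1 i2 unfolding Z_def by simp
    also have "\<dots> = (\<integral>\<omega>. Z \<omega> \<partial>P) + (q * (1 - p/2) - 1) * (\<integral>\<omega>. Z \<omega> * indicator (E (Suc t)) \<omega> \<partial>P)"
      unfolding key by (simp add: algebra_simps)
    also have "\<dots> \<le> (\<integral>\<omega>. Z \<omega> \<partial>P)"
      using qq nn by (simp add: mult_nonpos_nonneg)
    also have "\<dots> \<le> 1" using Suc unfolding Z_def .
    finally show ?case .
  qed
qed

lemma prod_g_eq:
  fixes E U :: "nat \<Rightarrow> 'w set" and q :: real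
  assumes "finite A"
  shows "(\<Prod>s\<in>A. 1 + (q - 1) * indicator (E s) \<omega> - q / 2 * indicator (E s \<inter> U s) \<omega>)
     = q ^ card {s\<in>A. \<omega> \<in> E s} * (1/2) ^ card {s\<in>A. \<omega> \<in> E s \<inter> U s}"
proof -
  have "(\<Prod>s\<in>A. 1 + (q - 1) * indicator (E s) \<omega> - q / 2 * indicator (E s \<inter> U s) \<omega>)
      = (\<Prod>s\<in>A. (if \<omega> \<in> E s then q else 1) * (if \<omega> \<in> E s \<inter> U s then 1/2 else 1))"
    by (rule prod.cong) (auto simp: indicator_def)
  also have "\<dots> = (\<Prod>s\<in>A. (if \<omega> \<in> E s then q else 1)) * (\<Prod>s\<in>A. (if \<omega> \<in> E s \<inter> U s then 1/2 else 1))"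
    by (rule prod.distrib)
  also have "\<dots> = q ^ card {s\<in>A. \<omega> \<in> E s} * (1/2) ^ card {s\<in>A. \<omega> \<in> E s \<inter> U s}"
    using assms by (simp add: prod.inter_filter[symmetric])
  finally show ?thesis .
qed

lemma tail:
  fixes P :: "'w measure" and F :: "nat \<Rightarrow> 'w measure" and E U :: "nat \<Rightarrow> 'w set" and p n0 :: real
    and N :: "'w \<Rightarrow> real" and T :: nat
  assumes prob: "prob_space P" and sub: "\<forall>t. subalgebra P (F t)"
    and mono: "\<forall>s t. s \<le> t \<longrightarrow> sets (F s) \<subseteq> sets (F t)"
    and E: "\<forall>t\<ge>1. E t \<in> sets (F (t - 1))" and U: "\<forall>t\<ge>1. U t \<in> sets (F t)"
    and cond: "\<forall>t\<ge>1. \<forall>A\<in>sets (F (t - 1)). measure P (E t \<inter> U t \<inter> A) = p * measure P (E t \<inter> A)"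
    and p: "0 \<le> p" and n0: "0 \<le> n0"
    and nT: "AE \<omega> in P. n0 \<le> real (card {s\<in>{1..T}. \<omega> \<in> E s})"
    and SN: "\<forall>\<omega>\<in>space P. real (card {s\<in>{1..T}. \<omega> \<in> E s \<inter> U s}) \<le> N \<omega>"
    and bad: "{\<omega>\<in>space P. N \<omega> \<le> p * n0 / 2} \<in> sets P"
  shows "measure P {\<omega>\<in>space P. N \<omega> \<le> p * n0 / 2} \<le> exp (- (p * n0 / 8))"
proof -
  interpret prob_space P by (rule prob)
  define g where "g = (\<lambda>s \<omega>. 1 + (exp (p/2) - 1) * indicator (E s) \<omega> - exp (p/2) / 2 * indicator (E s \<inter> U s) \<omega> :: real)"
  note S = super[OF prob sub mono E U cond p g_def, of T]
  define B where "B = {\<omega>\<in>space P. N \<omega> \<le> p * n0 / 2}"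
  define K where "K = exp (p * n0 / 2 - ln 2 * (p * n0 / 2))"
  have K0: "0 < K" unfolding K_def by simp
  have ZK: "AE \<omega> in P. K * indicator B \<omega> \<le> (\<Prod>s\<in>{1..T}. g s \<omega>)"
    using nT
  proof eventually_elim
    case (elim \<omega>)
    let ?n = "card {s\<in>{1..T}. \<omega> \<in> E s}" and ?S = "card {s\<in>{1..T}. \<omega> \<in> E s \<inter> U s}"
    have Z: "(\<Prod>s\<in>{1..T}. g s \<omega>) = exp (p/2) ^ ?n * (1/2) ^ ?S"
      unfolding g_def by (rule prod_g_eq) simp
    have Zn: "0 \<le> (\<Prod>s\<in>{1..T}. g s \<omega>)" unfolding Z by simp
    show ?case
    proof (cases "\<omega> \<in> B")
      case True
      then have sp: "\<omega> \<in> space P" and Nb: "N \<omega> \<le> p * n0 / 2" unfolding B_def by auto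
      have Sb: "real ?S \<le> p * n0 / 2" using SN sp Nb by force
      have e1: "exp (p/2) ^ ?n = exp (p/2 * real ?n)"
        by (simp add: exp_of_nat_mult[symmetric] mult.commute)
      have e3: "exp (ln 2 * real ?S) = (2::real) ^ ?S"
      proof -
        have "exp (real ?S * ln 2) = exp (ln 2) ^ ?S" by (rule exp_of_nat_mult)
        then show ?thesis by (simp add: mult.commute)
      qed
      have e2: "(1/2::real) ^ ?S = exp (- ln 2 * real ?S)"
        by (subst mult_minus_left, subst exp_minus, subst e3) (simp add: power_one_over inverse_eq_divide)
      have "p * n0 / 2 \<le> p/2 * real ?n" using elim p by (simp add: mult_left_mono)
      moreover have "ln 2 * real ?S \<le> ln 2 * (p * n0 / 2)" using Sb by (intro mult_left_mono) auto
      ultimately have lin: "p * n0 / 2 - ln 2 * (p * n0 / 2) \<le> p/2 * real ?n + - ln 2 * real ?S" by linarith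
      have "K \<le> exp (p/2 * real ?n + - ln 2 * real ?S)"
        unfolding K_def using lin by simp
      then have "K \<le> exp (p/2) ^ ?n * (1/2) ^ ?S"
        unfolding e1 e2 exp_add .
      then show ?thesis using True Z by simp
    next
      case False
      then show ?thesis using Zn by simp
    qed
  qed
  have iB: "integrable P (indicator B :: 'w \<Rightarrow> real)"
    using bad unfolding B_def by (intro integrable_const_bound[where B=1]) auto
  have "K * measure P B = (\<integral>\<omega>. K * indicator B \<omega> \<partial>P)"
    using bad unfolding B_def by simp
  also have "\<dots> \<le> (\<integral>\<omega>. (\<Prod>s\<in>{1..T}. g s \<omega>) \<partial>P)"
    by (rule integral_mono_AE) (use ZK S(2) iB in auto)
  also have "\<dots> \<le> 1" by (rule S(1))
  finally have "measure P B \<le> 1 / K" using K0 by (simp add: field_simps)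
  also have "1 / K = exp (- (p * n0 / 2 - ln 2 * (p * n0 / 2)))" unfolding K_def by (subst exp_minus) (simp add: inverse_eq_divide)
  also have "\<dots> \<le> exp (- (p * n0 / 8))"
  proof -
    have "ln 2 \<le> (3/4::real)" using ln2_le_25_over_36 by simp
    then have "ln 2 * (p * n0 / 2) \<le> 3/4 * (p * n0 / 2)" using p n0 by (intro mult_right_mono) auto
    then show ?thesis by (simp add: algebra_simps)
  qed
  finally show ?thesis unfolding B_def .
qed

lemma blocks:
  fixes Q :: "nat \<Rightarrow> bool"
  assumes "\<forall>j<m. c \<le> card {s\<in>{j*k+1..j*k+k}. Q s}"
  shows "m * c \<le> card {s\<in>{1..m*k}. Q s}"
  using assms
proof (induction m)
  case 0 then show ?case by simp
next
  case (Suc m)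
  have eq: "{s\<in>{1..Suc m*k}. Q s} = {s\<in>{1..m*k}. Q s} \<union> {s\<in>{m*k+1..m*k+k}. Q s}" by auto
  have "card {s\<in>{1..Suc m*k}. Q s} = card {s\<in>{1..m*k}. Q s} + card {s\<in>{m*k+1..m*k+k}. Q s}"
    unfolding eq by (rule card_Un_disjoint) auto
  moreover have "m * c \<le> card {s\<in>{1..m*k}. Q s}" using Suc by auto
  moreover have "c \<le> card {s\<in>{m*k+1..m*k+k}. Q s}" using Suc.prems by auto
  ultimately show ?case by simp
qed

theorem mainTheorem14:
  fixes P :: "'w measure" and M k T :: nat and r \<delta> :: real
    and x w :: "nat \<Rightarrow> 'w \<Rightarrow> real" and u d :: "nat \<Rightarrow> 'w \<Rightarrow> nat \<Rightarrow> real"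
    and a abar bbar cbar mubar wbar sigma_s :: real and b c mu :: "nat \<Rightarrow> real"
  assumes prob: "prob_space P"
    and M_pos: "1 \<le> M"
    and params: "0 < abar" "abar < 1" "0 \<le> a" "a \<le> abar"
      "\<forall>i<M. \<bar>b i\<bar> \<le> bbar" "\<forall>i<M. \<bar>c i\<bar> \<le> cbar" "\<forall>i<M. - mubar \<le> mu i \<and> mu i \<le> mubar"
    and meas: "\<forall>t. x t \<in> borel_measurable P" "\<forall>t. w t \<in> borel_measurable P"
      "\<forall>t i. (\<lambda>\<omega>. u t \<omega> i) \<in> borel_measurable P" "\<forall>t i. (\<lambda>\<omega>. d t \<omega> i) \<in> borel_measurable P"
    and actions: "\<forall>t. \<forall>\<omega>\<in>space P. u t \<omega> \<in> Uset M"
    and dynamics: "\<forall>t\<ge>1. AE \<omega> in P.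
        x (t + 1) \<omega> = a * x t \<omega> + (\<Sum>i<M. b i * u t \<omega> i) + (\<Sum>i<M. c i * d t \<omega> i) + w t \<omega>"
    and adherence: "\<forall>t\<ge>1. \<forall>i<M. (AE \<omega> in P. d t \<omega> i \<in> {0, 1}) \<and>
        (\<forall>B \<in> sets (borel :: (real \<times> real) measure).
           measure P {\<omega> \<in> space P. d t \<omega> i = 1 \<and> (x t \<omega>, u t \<omega> i) \<in> B}
           = (LINT \<omega>:{\<omega> \<in> space P. (x t \<omega>, u t \<omega> i) \<in> B}|P. u t \<omega> i * sigmoid (x t \<omega> + mu i)))"
    and noise_iid: "prob_space.indep_vars P (\<lambda>_. borel) w UNIV"
      "\<forall>t. distr P borel (w t) = distr P borel (w 0)"
    and noise_sym: "distr P borel (\<lambda>\<omega>. - w 0 \<omega>) = distr P borel (w 0)"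
    and noise_bdd: "0 < wbar" "AE \<omega> in P. \<bar>w 0 \<omega>\<bar> \<le> wbar"
    and noise_subg: "\<forall>l. prob_space.expectation P (\<lambda>\<omega>. exp (l * w 0 \<omega>)) \<le> exp (l\<^sup>2 * sigma_s\<^sup>2 / 2)"
    and noise_lc: "\<exists>f. log_concave f \<and> distributed P lborel (w 0) (\<lambda>z. ennreal (f z))"
    and x1: "distr P borel (x 1) = distr P borel (w 0)"
    and r_range: "0 < r" "r \<le> 1"
    and k_pos: "1 \<le> k"
    and policy: "exploratory P M (patient_filtration P M x u d w) u r k"
    and delta: "0 < \<delta>" "\<delta> < 1"
    and T_large: "real T \<ge> real k + 8 / r * real (M + 1) * ln (real M / \<delta>)"
  shows "measure P {\<omega> \<in> space P. \<forall>i<M.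
           real (count_treat u T i \<omega>) > r * (real T - real k) / (2 * real (M + 1))}
         \<ge> 1 - \<delta>"
proof -
  interpret prob_space P by (rule prob)
  define Xs where "Xs = (\<lambda>t. (\<Union>s\<in>{..t}. {x s, w s} \<union> {(\<lambda>\<omega>. u s \<omega> i) | i. i < M}
                                      \<union> {(\<lambda>\<omega>. d s \<omega> i) | i. i < M}))"
  define F where "F = patient_filtration P M x u d w"
  have F_eq: "F t = gen_sigma P (Xs t)" for t unfolding F_def Xs_def patient_filtration_def ..
  have Xs_meas: "Xs t \<subseteq> borel_measurable P" for t
    unfolding Xs_def using meas by auto
  have sub: "\<forall>t. subalgebra P (F t)" unfolding F_eq using gen_sigma_props(3)[OF Xs_meas] by blast
  have mono: "\<forall>s t. s \<le> t \<longrightarrow> sets (F s) \<subseteq> sets (F t)"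
  proof (intro allI impI)
    fix s t :: nat assume "s \<le> t"
    then have "Xs s \<subseteq> Xs t" unfolding Xs_def by (intro UN_mono) auto
    then show "sets (F s) \<subseteq> sets (F t)" unfolding F_eq by (rule gen_sigma_mono[OF Xs_meas Xs_meas])
  qed
  obtain explore draw where
    ex_meas: "\<forall>t\<ge>1. {\<omega> \<in> space P. explore t \<omega>} \<in> sets (F (t - 1))" and
    dr: "\<forall>t\<ge>1. (AE \<omega> in P. draw t \<omega> \<in> Uset M) \<and>
          (\<forall>v\<in>Uset M. {\<omega> \<in> space P. draw t \<omega> = v} \<in> sets P \<and>
             (\<forall>A\<in>sets (F (t - 1)).
                measure P ({\<omega> \<in> space P. draw t \<omega> = v} \<inter> A) = measure P A / real (M + 1)))" and
    ex_dr: "\<forall>t\<ge>1. AE \<omega> in P. explore t \<omega> \<longrightarrow> u t \<omega> = draw t \<omega>" and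
    blk: "\<forall>j. AE \<omega> in P. nat \<lceil>r * real k\<rceil> \<le> card {t \<in> {j+1..j+k}. explore t \<omega>}"
    using policy unfolding exploratory_def F_def by blast
  define E where "E = (\<lambda>t. {\<omega> \<in> space P. explore t \<omega>})"
  define U where "U = (\<lambda>i t. {\<omega> \<in> space P. u t \<omega> = basis_vec i})"
  define p where "p = 1 / real (M + 1)"
  define n0 where "n0 = r * (real T - real k)"
  have p0: "0 \<le> p" unfolding p_def by simp
  have lnpos: "0 < ln (real M / \<delta>)" using M_pos delta by simp
  have Tk: "real T - real k \<ge> 8 / r * real (M + 1) * ln (real M / \<delta>)" using T_large by simp
  have pos8: "0 < 8 / r * real (M + 1) * ln (real M / \<delta>)" using lnpos r_range by simp
  have n00: "0 \<le> n0" unfolding n0_def using Tk pos8 r_range by simp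
  have bv: "basis_vec i \<in> Uset M" if "i < M" for i
  proof -
    have "{j. basis_vec i j \<noteq> 0} = {i}" by (auto simp: basis_vec_def)
    then show ?thesis using that unfolding Uset_def by (auto simp: basis_vec_def)
  qed
  have UF: "U i t \<in> sets (F t)" if "i < M" for i t
  proof -
    have "U i t = (\<Inter>j\<in>{..<M}. (\<lambda>\<omega>. u t \<omega> j) -` {basis_vec i j} \<inter> space P)"
    proof (intro equalityI subsetI)
      fix \<omega> assume "\<omega> \<in> U i t" then show "\<omega> \<in> (\<Inter>j\<in>{..<M}. (\<lambda>\<omega>. u t \<omega> j) -` {basis_vec i j} \<inter> space P)"
        unfolding U_def by auto
    next
      fix \<omega> assume a: "\<omega> \<in> (\<Inter>j\<in>{..<M}. (\<lambda>\<omega>. u t \<omega> j) -` {basis_vec i j} \<inter> space P)"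
      have "0 \<in> {..<M}" using M_pos by auto
      then have sp: "\<omega> \<in> space P" using a by blast
      have "u t \<omega> j = basis_vec i j" for j
      proof (cases "j < M")
        case True then show ?thesis using a by blast
      next
        case False
        then have "u t \<omega> j = 0" using actions sp unfolding Uset_def by auto
        moreover have "basis_vec i j = 0" using False that unfolding basis_vec_def by auto
        ultimately show ?thesis by simp
      qed
      then show "\<omega> \<in> U i t" unfolding U_def using sp by auto
    qed
    also have "\<dots> \<in> sets (F t)"
    proof (rule sets.finite_INT)
      fix j assume "j \<in> {..<M}"
      then have "(\<lambda>\<omega>. u t \<omega> j) \<in> Xs t" unfolding Xs_def by blast
      then show "(\<lambda>\<omega>. u t \<omega> j) -` {basis_vec i j} \<inter> space P \<in> sets (F t)"
        unfolding F_eq by (rule gen_sigma_gen[OF Xs_meas]) simp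
    qed (use M_pos in \<open>auto simp: lessThan_empty_iff\<close>)
    finally show ?thesis .
  qed
  have UP: "U i t \<in> sets P" if "i < M" for i t
    using UF[OF that] sub unfolding subalgebra_def by blast
  have EP: "t \<ge> 1 \<Longrightarrow> E t \<in> sets P" for t
    using ex_meas sub unfolding subalgebra_def E_def by blast
  have cond: "\<forall>t\<ge>1. \<forall>A\<in>sets (F (t - 1)). measure P (E t \<inter> U i t \<inter> A) = p * measure P (E t \<inter> A)"
    if i: "i < M" for i
  proof (intro allI impI ballI)
    fix t :: nat and A assume t: "t \<ge> 1" and A: "A \<in> sets (F (t - 1))"
    have AP: "A \<in> sets P" using A sub unfolding subalgebra_def by blast
    have EA: "E t \<inter> A \<in> sets (F (t - 1))" using ex_meas t A unfolding E_def by auto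
    have D: "{\<omega> \<in> space P. draw t \<omega> = basis_vec i} \<in> sets P" using dr t bv[OF i] by blast
    have "measure P (E t \<inter> U i t \<inter> A) = measure P ({\<omega> \<in> space P. draw t \<omega> = basis_vec i} \<inter> (E t \<inter> A))"
    proof (rule measure_eq_AE)
      show "AE \<omega> in P. (\<omega> \<in> E t \<inter> U i t \<inter> A) = (\<omega> \<in> {\<omega> \<in> space P. draw t \<omega> = basis_vec i} \<inter> (E t \<inter> A))"
        using ex_dr t by (auto simp: E_def U_def elim!: eventually_mono)
    qed (use EP[OF t] UP[OF i] AP D in auto)
    also have "\<dots> = measure P (E t \<inter> A) / real (M + 1)" using dr t bv[OF i] EA by blast
    finally show "measure P (E t \<inter> U i t \<inter> A) = p * measure P (E t \<inter> A)" unfolding p_def by simp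
  qed
  have Esets: "\<forall>t\<ge>1. E t \<in> sets (F (t - 1))" using ex_meas unfolding E_def by blast
  have nT: "AE \<omega> in P. n0 \<le> real (card {s\<in>{1..T}. \<omega> \<in> E s})"
  proof -
    define q where "q = T div k"
    have "AE \<omega> in P. \<forall>m\<in>{..<q}. nat \<lceil>r * real k\<rceil> \<le> card {t \<in> {m*k+1..m*k+k}. explore t \<omega>}"
      by (rule AE_finite_allI) (use blk in auto)
    then show ?thesis
    using AE_space
    proof eventually_elim
      case (elim \<omega>)
      then have sp: "\<omega> \<in> space P" and h: "\<forall>m\<in>{..<q}. nat \<lceil>r * real k\<rceil> \<le> card {t \<in> {m*k+1..m*k+k}. explore t \<omega>}"
        by auto
      have "q * nat \<lceil>r * real k\<rceil> \<le> card {s\<in>{1..q*k}. explore s \<omega>}"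
        by (rule blocks) (use h in auto)
      also have "\<dots> \<le> card {s\<in>{1..T}. explore s \<omega>}"
      proof (rule card_mono)
        have "q * k \<le> T" unfolding q_def by simp
        then show "{s\<in>{1..q*k}. explore s \<omega>} \<subseteq> {s\<in>{1..T}. explore s \<omega>}" by auto
      qed simp
      also have "\<dots> = card {s\<in>{1..T}. \<omega> \<in> E s}" unfolding E_def using sp by simp
      finally have c1: "real q * real (nat \<lceil>r * real k\<rceil>) \<le> real (card {s\<in>{1..T}. \<omega> \<in> E s})"
        by (metis of_nat_le_iff of_nat_mult)
      have "r * real k \<le> real (nat \<lceil>r * real k\<rceil>)" by linarith
      then have c2: "real q * (r * real k) \<le> real q * real (nat \<lceil>r * real k\<rceil>)" by (intro mult_left_mono) auto
      have "T < (q + 1) * k" unfolding q_def using k_pos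
        by (metis add.commute div_mult_mod_eq mod_less_divisor mult_Suc nat_add_left_cancel_less
            Suc_eq_plus1 less_le_trans order_refl zero_less_iff_neq_zero le_zero_eq one_neq_zero)
      then have "real T - real k < real q * real k"
        by (metis add_diff_cancel_right' diff_less_eq distrib_right mult_1 of_nat_add of_nat_less_iff of_nat_mult)
      then have "r * (real T - real k) \<le> r * (real q * real k)" using r_range by (intro mult_left_mono) auto
      then show "n0 \<le> real (card {s\<in>{1..T}. \<omega> \<in> E s})" unfolding n0_def using c1 c2
        by (simp add: algebra_simps)
    qed
  qed
  define bad where "bad = (\<lambda>i. {\<omega>\<in>space P. real (count_treat u T i \<omega>) \<le> p * n0 / 2})"
  have cnt: "real (count_treat u T i \<omega>) = (\<Sum>t\<in>{1..T}. indicator (U i t) \<omega>)" if "\<omega> \<in> space P" for i \<omega>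
  proof -
    have "real (count_treat u T i \<omega>) = (\<Sum>t\<in>{t\<in>{1..T}. u t \<omega> = basis_vec i}. 1)"
      unfolding count_treat_def by simp
    also have "\<dots> = (\<Sum>t\<in>{1..T}. if u t \<omega> = basis_vec i then 1 else 0)"
      by (rule sum.inter_filter) simp
    also have "\<dots> = (\<Sum>t\<in>{1..T}. indicator (U i t) \<omega>)"
      using that by (intro sum.cong) (auto simp: U_def indicator_def)
    finally show ?thesis .
  qed
  have badP: "bad i \<in> sets P" if "i < M" for i
  proof -
    have "bad i = {\<omega>\<in>space P. (\<Sum>t\<in>{1..T}. indicator (U i t) \<omega>) \<le> p * n0 / 2}"
      unfolding bad_def using cnt by auto
    also have "\<dots> \<in> sets P"
    proof -
      have [measurable]: "U i t \<in> sets P" for t using UP[OF that] .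
      show ?thesis by measurable
    qed
    finally show ?thesis .
  qed
  have bad_bound: "measure P (bad i) \<le> \<delta> / real M" if i: "i < M" for i
  proof -
    have SN: "\<forall>\<omega>\<in>space P. real (card {s\<in>{1..T}. \<omega> \<in> E s \<inter> U i s}) \<le> real (count_treat u T i \<omega>)"
    proof
      fix \<omega> assume "\<omega> \<in> space P"
      have "card {s\<in>{1..T}. \<omega> \<in> E s \<inter> U i s} \<le> count_treat u T i \<omega>"
        unfolding count_treat_def by (rule card_mono) (auto simp: U_def)
      then show "real (card {s\<in>{1..T}. \<omega> \<in> E s \<inter> U i s}) \<le> real (count_treat u T i \<omega>)" by simp
    qed
    have "measure P (bad i) \<le> exp (- (p * n0 / 8))"
      unfolding bad_def
      by (rule tail[OF prob sub mono Esets _ cond[OF i] p0 n00 nT SN])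
         (use UF[OF i] badP[OF i] in \<open>auto simp: bad_def\<close>)
    also have "\<dots> \<le> exp (- ln (real M / \<delta>))"
    proof -
      have "ln (real M / \<delta>) \<le> p * n0 / 8"
      proof -
        have "8 * ln (real M / \<delta>) \<le> r / real (M + 1) * (real T - real k)"
          using Tk r_range by (simp add: field_simps)
        then show ?thesis unfolding p_def n0_def by (simp add: field_simps)
      qed
      then show ?thesis by simp
    qed
    also have "\<dots> = \<delta> / real M" using M_pos delta by (simp add: exp_minus)
    finally show ?thesis .
  qed
  have goodeq: "{\<omega> \<in> space P. \<forall>i<M. real (count_treat u T i \<omega>) > r * (real T - real k) / (2 * real (M + 1))}
      = space P - (\<Union>i\<in>{..<M}. bad i)"
  proof -
    have h: "p * n0 / 2 = r * (real T - real k) / (2 * real (M + 1))" unfolding p_def n0_def by simp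
    show ?thesis unfolding bad_def h by (auto simp del: of_nat_add simp add: not_le)
  qed
  have UB: "(\<Union>i\<in>{..<M}. bad i) \<in> sets P" using badP by auto
  have "measure P (\<Union>i\<in>{..<M}. bad i) \<le> (\<Sum>i\<in>{..<M}. measure P (bad i))"
    by (rule finite_measure_subadditive_finite) (use badP in auto)
  also have "\<dots> \<le> (\<Sum>i\<in>{..<M}. \<delta> / real M)" by (rule sum_mono) (use bad_bound in auto)
  also have "\<dots> = \<delta>" using M_pos by simp
  finally have "measure P (\<Union>i\<in>{..<M}. bad i) \<le> \<delta>" .
  then show ?thesis unfolding goodeq using finite_measure_compl[OF UB] prob_space by simp
qed

end
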